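(* Let $p\in(0,1)$, let $(a_j)_{j\ge1}$ be positive rational numbers with $\sum_{j=1}^\infty a_j=p$, and let $\epsilon:\mathbb N\to\mathbb R$ be monotonically non-increasing with $\lim_{N\to\infty}\epsilon(N)=0$ and $p-\sum_{j=1}^N a_j\le \epsilon(N)$ for all $N\in\mathbb N$. Let $X_1,X_2,\dots$ be independent Bernoulli$(1/2)$ random variables, run the algorithm described in the context, and let $N_M$ denote the number of series terms used when the algorithm terminates (the final value of the counter $N$). Then for every $n\in\mathbb N$, $$\Pr[N_M>n]<4\epsilon(n).$$ In addition, if there exist $r>1$, $K>0$ and $n_0$ such that $\epsilon(n)\le K/n^r$ for all $n\ge n_0$, then $\mathbb E[N_M]<\infty$.
   Context: The algorithm: initialise $N\leftarrow0$, $S\leftarrow0$, $E\leftarrow1$, $A\leftarrow0$, $s\leftarrow0$, $k\leftarrow0$. Repeat the following iteration: set $k\leftarrow k+1$ and $A\leftarrow A+s\cdot2^{-k}$; then, while none of the three conditions (i) $S+E\le A+2^{-k}$, (ii) $S>A+2^{-k}$, (iii) $S>A+\tfrac12 2^{-k}$ and $S+E\le A+\tfrac32 2^{-k}$ holds, do $N\leftarrow N+1$, $S\leftarrow S+a_N$, $E\leftarrow\epsilon(N)$; after this inner loop set $s\leftarrow0$ if (i) holds, else $s\leftarrow2$ if (ii) holds, else $s\leftarrow1$. The iteration is repeated until $X_k=0$ (coin $X_k$ is consumed at the end of iteration $k$). After the last iteration, output $Y=0$ if $s=0$, $Y=1$ if $s=2$, and $Y=X_{k+1}$ if $s=1$.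 *)

theory Defs
  imports "HOL-Probability.Probability"
begin

definition psum :: "(nat \<Rightarrow> real) \<Rightarrow> nat \<Rightarrow> real" where
  "psum a N = (\<Sum>j\<in>{1..N}. a j)"

text \<open>Error variable E after N series terms were used: initially E = 1, afterwards E = eps N.\<close>
definition errv :: "(nat \<Rightarrow> real) \<Rightarrow> nat \<Rightarrow> real" where
  "errv eps N = (if N = 0 then 1 else eps N)"

text \<open>The three stopping conditions of the inner loop in iteration k, with current A and N.\<close>
definition cond1 :: "(nat \<Rightarrow> real) \<Rightarrow> (nat \<Rightarrow> real) \<Rightarrow> real \<Rightarrow> nat \<Rightarrow> nat \<Rightarrow> bool" where
  "cond1 a eps A k N \<longleftrightarrow> psum a N + errv eps N \<le> A + (1/2)^k"

definition cond2 :: "(nat \<Rightarrow> real) \<Rightarrow> (nat \<Rightarrow> real) \<Rightarrow> real \<Rightarrow> nat \<Rightarrow> nat \<Rightarrow> bool" where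
  "cond2 a eps A k N \<longleftrightarrow> psum a N > A + (1/2)^k"

definition cond3 :: "(nat \<Rightarrow> real) \<Rightarrow> (nat \<Rightarrow> real) \<Rightarrow> real \<Rightarrow> nat \<Rightarrow> nat \<Rightarrow> bool" where
  "cond3 a eps A k N \<longleftrightarrow> psum a N > A + (1/2) * (1/2)^k \<and>
                         psum a N + errv eps N \<le> A + (3/2) * (1/2)^k"

definition stopc :: "(nat \<Rightarrow> real) \<Rightarrow> (nat \<Rightarrow> real) \<Rightarrow> real \<Rightarrow> nat \<Rightarrow> nat \<Rightarrow> bool" where
  "stopc a eps A k N \<longleftrightarrow> cond1 a eps A k N \<or> cond2 a eps A k N \<or> cond3 a eps A k N"

text \<open>One outer iteration: from the state (N, A, s) at the end of iteration k, perform
  iteration k+1. The inner while loop increments N until a stopping condition holds,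
  i.e. it yields the least m \<ge> N satisfying one of the conditions.
  (S and E are determined by N: S = psum a N, E = errv eps N.)\<close>
definition alg_step :: "(nat \<Rightarrow> real) \<Rightarrow> (nat \<Rightarrow> real) \<Rightarrow> nat \<Rightarrow> nat \<times> real \<times> nat \<Rightarrow> nat \<times> real \<times> nat" where
  "alg_step a eps k st =
     (let (N, A, s) = st;
          k' = Suc k;
          A' = A + real s * (1/2)^k';
          N' = (LEAST m. N \<le> m \<and> stopc a eps A' k' m);
          s' = (if cond1 a eps A' k' N' then 0 else if cond2 a eps A' k' N' then 2 else (1::nat))
      in (N', A', s'))"

text \<open>State (N, A, s) after k outer iterations (the iterations themselves do not depend on
  the coins; the coins only decide when to stop).\<close>
primrec alg_state :: "(nat \<Rightarrow> real) \<Rightarrow> (nat \<Rightarrow> real) \<Rightarrow> nat \<Rightarrow> nat \<times> real \<times> nat" where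
  "alg_state a eps 0 = (0, 0, 0)"
| "alg_state a eps (Suc k) = alg_step a eps k (alg_state a eps k)"

text \<open>N_M: the value of the counter N when the algorithm terminates, i.e. after the
  iteration k (k \<ge> 1) in which the first coin X_k = 0 (False) is observed.\<close>
definition NM :: "(nat \<Rightarrow> real) \<Rightarrow> (nat \<Rightarrow> real) \<Rightarrow> (nat \<Rightarrow> 'w \<Rightarrow> bool) \<Rightarrow> 'w \<Rightarrow> nat" where
  "NM a eps X \<omega> = fst (alg_state a eps (LEAST k. 1 \<le> k \<and> \<not> X k \<omega>))"

end

theory Submission
  imports Defs
begin



lemma stop_small:
  assumes "1 \<le> m" "eps m \<le> (1/2)^k/2"
  shows "stopc a eps A k m"
proof -
  have E: "errv eps m = eps m" using assms(1) by (simp add: errv_def)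
  define h :: real where "h = (1/2)^k"
  have "eps m \<le> h/2" using assms(2) h_def by simp
  then show ?thesis unfolding stopc_def cond1_def cond2_def cond3_def E h_def[symmetric]
    by (cases "psum a m + eps m \<le> A + h"; cases "psum a m > A + h") auto
qed

lemma fst_step: "\<exists>A'. fst (alg_state a eps (Suc k)) =
   (LEAST m. fst (alg_state a eps k) \<le> m \<and> stopc a eps A' (Suc k) m)"
proof -
  obtain N A s where st: "alg_state a eps k = (N, A, s)" by (cases "alg_state a eps k") auto
  show ?thesis by (simp add: st alg_step_def Let_def) (rule exI, rule refl)
qed

lemma N_bound:
  "\<And>n. 1 \<le> n \<Longrightarrow> eps n \<le> (1/2)^k/2 \<Longrightarrow> fst (alg_state a eps k) \<le> n"
proof (induction k)
  case 0
  then show ?case by simp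
next
  case (Suc k)
  have "eps n \<le> (1/2)^k/2" using Suc.prems(2) by (simp add: field_simps)
  then have le: "fst (alg_state a eps k) \<le> n" using Suc.IH Suc.prems(1) by blast
  obtain A' where eq: "fst (alg_state a eps (Suc k)) =
   (LEAST m. fst (alg_state a eps k) \<le> m \<and> stopc a eps A' (Suc k) m)" using fst_step by blast
  have "stopc a eps A' (Suc k) n" using stop_small Suc.prems by blast
  then show ?case unfolding eq using le by (intro Least_le) simp
qed

lemma N_step:
  assumes lim: "eps \<longlonglongrightarrow> 0"
  shows "\<exists>A'. fst (alg_state a eps (Suc k)) =
   (LEAST m. fst (alg_state a eps k) \<le> m \<and> stopc a eps A' (Suc k) m)
   \<and> fst (alg_state a eps k) \<le> fst (alg_state a eps (Suc k))"
proof -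
  obtain A' where eq: "fst (alg_state a eps (Suc k)) =
   (LEAST m. fst (alg_state a eps k) \<le> m \<and> stopc a eps A' (Suc k) m)" using fst_step by blast
  have "0 < ((1::real)/2)^(Suc k)/2" by simp
  from order_tendstoD(2)[OF lim this] obtain N where N: "\<And>n. n \<ge> N \<Longrightarrow> eps n < (1/2)^(Suc k)/2"
    unfolding eventually_sequentially by blast
  define n where "n = max N 1"
  have n1: "1 \<le> n" and en: "eps n \<le> (1/2)^(Suc k)/2" using N[of n] by (auto simp: n_def)
  have "eps n \<le> (1/2)^k/2" using en by (simp add: field_simps)
  then have le: "fst (alg_state a eps k) \<le> n" using N_bound n1 by blast
  have "stopc a eps A' (Suc k) n" using stop_small n1 en by blast
  with le have "fst (alg_state a eps k) \<le> (LEAST m. fst (alg_state a eps k) \<le> m \<and> stopc a eps A' (Suc k) m)"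
    by (metis (mono_tags, lifting) LeastI)
  with eq show ?thesis by auto
qed

lemma N_mono:
  assumes lim: "eps \<longlonglongrightarrow> 0"
  shows "mono (\<lambda>k. fst (alg_state a eps k))"
  using N_step[OF lim] by (intro incseq_SucI) blast

lemma probB:
  fixes M :: "'w measure" and X :: "nat \<Rightarrow> 'w \<Rightarrow> bool"
  assumes "prob_space M"
    and ind: "prob_space.indep_vars M (\<lambda>_. count_space UNIV) X {1..}"
    and half: "\<And>i. 1 \<le> i \<Longrightarrow> measure M {\<omega> \<in> space M. X i \<omega>} = 1/2"
  shows "{\<omega> \<in> space M. \<forall>j\<in>{1..k}. X j \<omega>} \<in> sets M \<and>
         measure M {\<omega> \<in> space M. \<forall>j\<in>{1..k}. X j \<omega>} = (1/2)^k"
proof -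
  interpret prob_space M by fact
  have rv: "\<And>j. 1 \<le> j \<Longrightarrow> X j \<in> measurable M (count_space UNIV)"
    using conjunct1[OF ind[unfolded prob_space.indep_vars_def2[OF assms(1)]]] by simp
  have ev: "\<And>j. 1 \<le> j \<Longrightarrow> X j -` {True} \<inter> space M \<in> sets M"
    by (rule measurable_sets[OF rv]) simp_all
  have evq: "\<And>j. X j -` {True} \<inter> space M = {\<omega> \<in> space M. X j \<omega>}" by auto
  show ?thesis
  proof (cases "k = 0")
    case True
    then show ?thesis by (simp add: prob_space)
  next
    case False
    have eqI: "{\<omega> \<in> space M. \<forall>j\<in>{1..k}. X j \<omega>} = (\<Inter>j\<in>{1..k}. X j -` {True} \<inter> space M)"
      using False by auto
    have "{\<omega> \<in> space M. \<forall>j\<in>{1..k}. X j \<omega>} \<in> sets M"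
      unfolding eqI using False ev by (intro sets.finite_INT) auto
    moreover have "prob (\<Inter>j\<in>{1..k}. X j -` {True} \<inter> space M) = (\<Prod>j\<in>{1..k}. prob (X j -` {True} \<inter> space M))"
    proof (rule indep_setsD[of _ "{1..}"])
      show "indep_sets (\<lambda>i. {X i -` A \<inter> space M |A. A \<in> sets (count_space UNIV)}) {1..}"
        using conjunct2[OF ind[unfolded prob_space.indep_vars_def2[OF assms(1)]]] .
      show "{1..k} \<subseteq> {1..}" by auto
      show "{1..k} \<noteq> {}" using False by simp
      show "finite {1..k}" by simp
      show "\<forall>j\<in>{1..k}. X j -` {True} \<inter> space M \<in> {X j -` A \<inter> space M |A. A \<in> sets (count_space UNIV)}"
        by (intro ballI CollectI exI[of _ "{True}"] conjI refl) simp
    qed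
    moreover have "(\<Prod>j\<in>{1..k}. prob (X j -` {True} \<inter> space M)) = (1/2)^k"
    proof -
      have "(\<Prod>j\<in>{1..k}. prob (X j -` {True} \<inter> space M)) = (\<Prod>j\<in>{1..k}. (1/2::real))"
        by (intro prod.cong refl) (simp add: evq half)
      then show ?thesis by simp
    qed
    ultimately show ?thesis by (simp only: eqI)
  qed
qed



lemma psum_alt: "psum a n = (\<Sum>j<n. a (Suc j))"
  by (induction n) (simp_all add: psum_def)

lemma eps_pos:
  assumes pos: "\<And>j. 1 \<le> j \<Longrightarrow> a j \<in> \<rat> \<and> a j > 0"
    and s: "(\<lambda>j. a (Suc j)) sums p"
    and err: "\<And>N. 1 \<le> N \<Longrightarrow> p - psum a N \<le> eps N"
    and n: "1 \<le> n"
  shows "0 < eps n"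
proof -
  have sm: "summable (\<lambda>j. a (Suc j))" using s by (rule sums_summable)
  have p: "p = (\<Sum>j. a (Suc (j + n))) + (\<Sum>j<n. a (Suc j))"
    using suminf_split_initial_segment[OF sm, of n] s sums_unique by auto
  have "0 < (\<Sum>j. a (Suc (j + n)))"
    using summable_ignore_initial_segment[OF sm, of n] pos by (intro suminf_pos) auto
  then have "psum a n < p" using p psum_alt[of a n] by linarith
  then show ?thesis using err[OF n] by linarith
qed

lemma part1:
  fixes M :: "'w measure" and X :: "nat \<Rightarrow> 'w \<Rightarrow> bool"
  assumes PS: "prob_space M"
    and ind: "prob_space.indep_vars M (\<lambda>_. count_space UNIV) X {1..}"
    and half: "\<And>i. 1 \<le> i \<Longrightarrow> measure M {\<omega> \<in> space M. X i \<omega>} = 1/2"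
    and lim: "eps \<longlonglongrightarrow> 0"
    and epos: "0 < eps n"
    and n: "1 \<le> n"
  shows "measure M {\<omega> \<in> space M. NM a eps X \<omega> > n} < 4 * eps n"
proof -
  interpret prob_space M by fact
  define Nk where "Nk k = fst (alg_state a eps k)" for k
  have mono: "mono Nk" unfolding Nk_def using N_mono[OF lim] .
  have NM: "NM a eps X \<omega> = Nk (LEAST k. 1 \<le> k \<and> \<not> X k \<omega>)" for \<omega>
    by (simp add: NM_def Nk_def)
  show ?thesis
  proof (cases "\<exists>k. n < Nk k")
    case False
    then have "{\<omega> \<in> space M. NM a eps X \<omega> > n} = {}" unfolding NM by (auto simp: not_less)
    then have "measure M {\<omega> \<in> space M. NM a eps X \<omega> > n} = 0" by (simp only: measure_empty)
    then show ?thesis using epos by simp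
  next
    case True
    define k0 where "k0 = (LEAST k. n < Nk k)"
    have k0: "n < Nk k0" unfolding k0_def using True by (metis LeastI)
    have "k0 \<noteq> 0"
    proof
      assume "k0 = 0" then show False using k0 by (simp add: Nk_def)
    qed
    then obtain k1 where k1: "k0 = Suc k1" by (cases k0) auto
    have le1: "Nk k1 \<le> n" using not_less_Least[of k1 "\<lambda>k. n < Nk k"] k1 unfolding k0_def[symmetric]
      by simp
    obtain A' where eq: "Nk (Suc k1) = (LEAST m. Nk k1 \<le> m \<and> stopc a eps A' (Suc k1) m)"
      using fst_step unfolding Nk_def by blast
    have "\<not> stopc a eps A' (Suc k1) n"
      using not_less_Least[of n "\<lambda>m. Nk k1 \<le> m \<and> stopc a eps A' (Suc k1) m"] k0 k1 eq le1 by auto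
    then have big: "eps n > (1/2)^(Suc k1)/2" using stop_small n by (metis not_le)
    have sub: "{\<omega> \<in> space M. NM a eps X \<omega> > n} \<subseteq> {\<omega> \<in> space M. \<forall>j\<in>{1..k1}. X j \<omega>}"
    proof safe
      fix \<omega> j assume \<omega>: "\<omega> \<in> space M" "n < NM a eps X \<omega>" and j: "j \<in> {1..k1}"
      show "X j \<omega>"
      proof (rule ccontr)
        assume "\<not> X j \<omega>"
        then have "(LEAST k. 1 \<le> k \<and> \<not> X k \<omega>) \<le> j" using j by (intro Least_le) auto
        then have "(LEAST k. 1 \<le> k \<and> \<not> X k \<omega>) \<le> k1" using j by auto
        then have "NM a eps X \<omega> \<le> Nk k1" unfolding NM using mono by (simp add: monoD)
        then show False using \<omega> le1 by linarith
      qed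
    qed
    have "measure M {\<omega> \<in> space M. NM a eps X \<omega> > n} \<le> measure M {\<omega> \<in> space M. \<forall>j\<in>{1..k1}. X j \<omega>}"
      using probB[OF PS ind half, of k1] sub by (intro finite_measure_mono) auto
    also have "\<dots> = (1/2)^k1" using probB[OF PS ind half, of k1] by simp
    also have "\<dots> = 4 * ((1/2)^(Suc k1)/2)" by simp
    also have "\<dots> < 4 * eps n" using big by simp
    finally show ?thesis .
  qed
qed

lemma Nk_growth:
  assumes r: "r > 1" and K: "K > 0" and b: "\<forall>n\<ge>n0. eps n \<le> K / real n powr r"
  shows "real (fst (alg_state a eps k)) \<le> (real n0 + 2) + (2*K) powr (1/r) * (2 powr (1/r))^k"
proof -
  define T where "T = (K*2^(Suc k)) powr (1/r)"
  define m where "m = nat \<lceil>T\<rceil> + n0 + 1"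
  have Tpos: "T > 0" using K by (simp add: T_def)
  have m1: "1 \<le> m" and mn0: "n0 \<le> m" by (auto simp: m_def)
  have mT: "T \<le> real m" unfolding m_def by linarith
  have "T powr r \<le> real m powr r" using mT Tpos r by (intro powr_mono2) auto
  moreover have "T powr r = K*2^(Suc k)" unfolding T_def powr_powr using r K by (simp add: powr_one)
  ultimately have mr: "K*2^(Suc k) \<le> real m powr r" by simp
  have "eps m \<le> K / real m powr r" using b mn0 by blast
  also have "\<dots> \<le> K / (K*2^(Suc k))" using mr K m1 by (intro divide_left_mono) auto
  also have "\<dots> = (1/2)^k/2" using K by (simp add: power_divide)
  finally have "fst (alg_state a eps k) \<le> m" using N_bound m1 by blast
  then have "real (fst (alg_state a eps k)) \<le> real m" by simp
  also have "\<dots> \<le> T + real n0 + 2" unfolding m_def using Tpos by linarith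
  also have "T = (2*K) powr (1/r) * (2 powr (1/r))^k"
  proof -
    have "T = ((2*K) * 2 powr real k) powr (1/r)" unfolding T_def by (simp add: powr_realpow mult_ac)
    also have "\<dots> = (2*K) powr (1/r) * (2 powr real k) powr (1/r)" using K by (simp add: powr_mult)
    also have "(2 powr real k) powr (1/r) = (2 powr (1/r))^k" by (simp add: powr_powr powr_power)
    finally show ?thesis .
  qed
  finally show ?thesis by simp
qed

lemma part2:
  fixes M :: "'w measure" and X :: "nat \<Rightarrow> 'w \<Rightarrow> bool"
  assumes PS: "prob_space M"
    and ind: "prob_space.indep_vars M (\<lambda>_. count_space UNIV) X {1..}"
    and half: "\<And>i. 1 \<le> i \<Longrightarrow> measure M {\<omega> \<in> space M. X i \<omega>} = 1/2"
    and r: "r > 1" and K: "K > 0" and b: "\<forall>n\<ge>n0. eps n \<le> K / real n powr r"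
  shows "(\<integral>\<^sup>+ \<omega>. ennreal (real (NM a eps X \<omega>)) \<partial>M) < \<infinity>"
proof -
  interpret prob_space M by fact
  define Nk where "Nk k = fst (alg_state a eps k)" for k
  define B where "B k = {\<omega> \<in> space M. \<forall>j\<in>{1..k}. X j \<omega>}" for k
  define c where "c k = real (Nk (Suc k))" for k
  define q where "q = (2::real) powr (1/r)"
  define D where "D = (2*K) powr (1/r)"
  define C where "C = real n0 + 2"
  define g where "g k = (C + D * q^(Suc k)) * (1/2)^k" for k
  have Bs: "B k \<in> sets M" and PB: "measure M (B k) = (1/2)^k" for k
    using probB[OF PS ind half, of k] by (auto simp: B_def)
  have cb: "c k \<le> C + D * q^(Suc k)" for k
    using Nk_growth[OF r K b, of a "Suc k"] by (simp add: c_def Nk_def C_def D_def q_def)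
  have c0: "0 \<le> c k" for k by (simp add: c_def)
  have NM: "NM a eps X \<omega> = Nk (LEAST k. 1 \<le> k \<and> \<not> X k \<omega>)" for \<omega>
    by (simp add: NM_def Nk_def)
  have pw: "ennreal (real (NM a eps X \<omega>)) \<le> (\<Sum>k. ennreal (c k) * indicator (B k) \<omega>)"
    if \<omega>: "\<omega> \<in> space M" for \<omega>
  proof (cases "(LEAST k. 1 \<le> k \<and> \<not> X k \<omega>)")
    case 0
    then show ?thesis unfolding NM by (simp add: Nk_def)
  next
    case (Suc k')
    have "\<omega> \<in> B k'"
    proof -
      have "X j \<omega>" if j: "j \<in> {1..k'}" for j
      proof (rule ccontr)
        assume "\<not> X j \<omega>"
        then have "(LEAST k. 1 \<le> k \<and> \<not> X k \<omega>) \<le> j" using j by (intro Least_le) auto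
        then show False using Suc j by auto
      qed
      then show ?thesis using \<omega> by (auto simp: B_def)
    qed
    then have eq: "ennreal (real (NM a eps X \<omega>)) = ennreal (c k') * indicator (B k') \<omega>"
      unfolding NM Suc by (simp add: c_def)
    show ?thesis unfolding eq
      using ennreal_suminf_lessD[of "\<lambda>k. ennreal (c k) * indicator (B k) \<omega>" "ennreal (c k') * indicator (B k') \<omega>" k']
      by (meson not_le less_irrefl)
  qed
  have "(\<integral>\<^sup>+ \<omega>. ennreal (real (NM a eps X \<omega>)) \<partial>M) \<le> (\<integral>\<^sup>+ \<omega>. (\<Sum>k. ennreal (c k) * indicator (B k) \<omega>) \<partial>M)"
    using pw by (intro nn_integral_mono) auto
  also have "\<dots> = (\<Sum>k. \<integral>\<^sup>+ \<omega>. ennreal (c k) * indicator (B k) \<omega> \<partial>M)"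
    using Bs by (intro nn_integral_suminf) auto
  also have "\<dots> = (\<Sum>k. ennreal (c k * (1/2)^k))"
    using Bs PB c0 by (simp add: nn_integral_cmult_indicator emeasure_eq_measure ennreal_mult'')
  also have "\<dots> \<le> (\<Sum>k. ennreal (g k))"
    using cb by (intro suminf_le summableI ennreal_leI) (auto simp: g_def intro!: mult_right_mono)
  also have "\<dots> < \<infinity>"
  proof -
    have q0: "0 < q" by (simp add: q_def)
    have "q < 2 powr 1" unfolding q_def using r by (intro powr_less_mono) auto
    then have q2: "q < 2" by simp
    have geq: "g = (\<lambda>k. C * (1/2)^k + (D*q) * (q/2)^k)"
      by (rule ext) (simp add: g_def algebra_simps power_divide)
    have "summable g" unfolding geq using q0 q2
      by (intro summable_add summable_mult summable_geometric) auto
    moreover have "0 \<le> g k" for k unfolding g_def C_def D_def q_def by simp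
    ultimately show ?thesis using ennreal_suminf_neq_top by (simp add: less_top)
  qed
  finally show ?thesis .
qed

theorem theorem3:
  fixes M :: "'w measure" and X :: "nat \<Rightarrow> 'w \<Rightarrow> bool"
    and a :: "nat \<Rightarrow> real" and eps :: "nat \<Rightarrow> real" and p :: real
  assumes "prob_space M"
    and "prob_space.indep_vars M (\<lambda>_. count_space UNIV) X {1..}"
    and "\<And>i. 1 \<le> i \<Longrightarrow> measure M {\<omega> \<in> space M. X i \<omega>} = 1/2"
    and "0 < p" and "p < 1"
    and "\<And>j. 1 \<le> j \<Longrightarrow> a j \<in> \<rat> \<and> a j > 0"
    and "(\<lambda>j. a (Suc j)) sums p"
    and "\<And>m n. 1 \<le> m \<Longrightarrow> m \<le> n \<Longrightarrow> eps n \<le> eps m"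
    and "eps \<longlonglongrightarrow> 0"
    and "\<And>N. 1 \<le> N \<Longrightarrow> p - psum a N \<le> eps N"
  shows "(\<forall>n\<ge>1. measure M {\<omega> \<in> space M. NM a eps X \<omega> > n} < 4 * eps n) \<and>
         ((\<exists>r K n0. r > 1 \<and> K > 0 \<and> (\<forall>n\<ge>n0. eps n \<le> K / real n powr r)) \<longrightarrow>
            (\<integral>\<^sup>+ \<omega>. ennreal (real (NM a eps X \<omega>)) \<partial>M) < \<infinity>)"
proof -
  have p1: "\<forall>n\<ge>1. measure M {\<omega> \<in> space M. NM a eps X \<omega> > n} < 4 * eps n"
  proof (intro allI impI)
    fix n :: nat assume n: "1 \<le> n"
    have "0 < eps n" using eps_pos[OF assms(6,7,10) n] .
    then show "measure M {\<omega> \<in> space M. NM a eps X \<omega> > n} < 4 * eps n"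
      using part1[OF assms(1,2,3,9) _ n] by blast
  qed
  show ?thesis
  proof (intro conjI p1 impI)
    assume "\<exists>r K n0. r > 1 \<and> K > 0 \<and> (\<forall>n\<ge>n0. eps n \<le> K / real n powr r)"
    then obtain r K n0 where "r > 1" "K > 0" "\<forall>n\<ge>n0. eps n \<le> K / real n powr r" by blast
    then show "(\<integral>\<^sup>+ \<omega>. ennreal (real (NM a eps X \<omega>)) \<partial>M) < \<infinity>"
      using part2[OF assms(1,2,3)] by blast
  qed
qed


end
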